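(* Let $T>0$, $N=2$, $M=2$. Consider minimizing $\mathbb V(T)=\frac12(\xi_1(T)^2+\xi_2(T)^2)$ over $\alpha\in\mathcal U_2$, where $\dot\xi_i=-\xi_i+(1-\alpha_i)\bar\xi$, $\bar\xi=\frac12(\xi_1+\xi_2)$, with $\bar\xi(0)>0$ and $\xi_1(0)>\xi_2(0)$. Let $\alpha$ be an optimal control whose trajectory satisfies $\xi_1(t)\ge\xi_2(t)$ for all $t$, and let $(\lambda_1,\lambda_2)$ be the corresponding covectors given by the Pontryagin maximum principle: $$\dot\lambda_1=\tfrac{1+\alpha_1}{2}\lambda_1-\tfrac{1-\alpha_2}{2}\lambda_2,\quad \dot\lambda_2=\tfrac{1+\alpha_2}{2}\lambda_2-\tfrac{1-\alpha_1}{2}\lambda_1,\quad \lambda(T)=(\xi_1(T),\xi_2(T)),$$ and for almost every $t$, $\alpha(t)$ minimizes $a\mapsto-\bar\xi(t)(a_1\lambda_1(t)+a_2\lambda_2(t))$ over $a\in[0,1]^2$, $a_1+a_2\le2$. Then: (i) if $\lambda_2(T)>0$, then $\lambda_1(t)>0$ and $\lambda_2(t)>0$ for all $t\in[0,T]$; (ii) if $\lambda_2(T)=0$, then $\lambda_1(t)>0$ and $\lambda_2(t)=0$ for all $t\in[0,T]$; (iii) if $\lambda_2(T)<0$, then $\lambda_2(t)<0$ for all $t\in[0,T]$.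
   Context: $\mathcal U_2$ is the set of measurable $\alpha:[0,T]\to[0,1]^2$ with $\alpha_1+\alpha_2\le2$. *)

theory Defs
  imports "HOL-Analysis.Analysis"
begin

definition admissible :: "real \<Rightarrow> (real \<Rightarrow> real) \<Rightarrow> (real \<Rightarrow> real) \<Rightarrow> bool" where
  "admissible T a1 a2 \<longleftrightarrow>
     a1 \<in> borel_measurable (restrict_space lborel {0..T}) \<and>
     a2 \<in> borel_measurable (restrict_space lborel {0..T}) \<and>
     (\<forall>t\<in>{0..T}. 0 \<le> a1 t \<and> a1 t \<le> 1 \<and> 0 \<le> a2 t \<and> a2 t \<le> 1 \<and> a1 t + a2 t \<le> 2)"

definition xbar :: "real \<Rightarrow> real \<Rightarrow> real" where
  "xbar u v = (u + v) / 2"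

text \<open>(x1,x2) solves x_i' = -x_i + (1 - a_i) xbar on [0,T] (Caratheodory / integral sense).\<close>
definition trajectory :: "real \<Rightarrow> (real \<Rightarrow> real) \<Rightarrow> (real \<Rightarrow> real) \<Rightarrow> (real \<Rightarrow> real) \<Rightarrow> (real \<Rightarrow> real) \<Rightarrow> bool" where
  "trajectory T a1 a2 x1 x2 \<longleftrightarrow>
     (\<forall>t\<in>{0..T}.
        ((\<lambda>s. - x1 s + (1 - a1 s) * xbar (x1 s) (x2 s)) has_integral (x1 t - x1 0)) {0..t} \<and>
        ((\<lambda>s. - x2 s + (1 - a2 s) * xbar (x1 s) (x2 s)) has_integral (x2 t - x2 0)) {0..t})"

definition cost :: "real \<Rightarrow> (real \<Rightarrow> real) \<Rightarrow> (real \<Rightarrow> real) \<Rightarrow> real" where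
  "cost T x1 x2 = (x1 T ^ 2 + x2 T ^ 2) / 2"

definition optimal :: "real \<Rightarrow> (real \<Rightarrow> real) \<Rightarrow> (real \<Rightarrow> real) \<Rightarrow> (real \<Rightarrow> real) \<Rightarrow> (real \<Rightarrow> real) \<Rightarrow> bool" where
  "optimal T a1 a2 x1 x2 \<longleftrightarrow>
     admissible T a1 a2 \<and> trajectory T a1 a2 x1 x2 \<and>
     (\<forall>b1 b2 y1 y2. admissible T b1 b2 \<and> trajectory T b1 b2 y1 y2 \<and>
        y1 0 = x1 0 \<and> y2 0 = x2 0 \<longrightarrow> cost T x1 x2 \<le> cost T y1 y2)"

definition costate :: "real \<Rightarrow> (real \<Rightarrow> real) \<Rightarrow> (real \<Rightarrow> real) \<Rightarrow> (real \<Rightarrow> real) \<Rightarrow> (real \<Rightarrow> real)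
     \<Rightarrow> (real \<Rightarrow> real) \<Rightarrow> (real \<Rightarrow> real) \<Rightarrow> bool" where
  "costate T a1 a2 x1 x2 l1 l2 \<longleftrightarrow>
     (\<forall>t\<in>{0..T}.
        ((\<lambda>s. (1 + a1 s) / 2 * l1 s - (1 - a2 s) / 2 * l2 s) has_integral (l1 t - l1 0)) {0..t} \<and>
        ((\<lambda>s. (1 + a2 s) / 2 * l2 s - (1 - a1 s) / 2 * l1 s) has_integral (l2 t - l2 0)) {0..t}) \<and>
     l1 T = x1 T \<and> l2 T = x2 T"

definition min_condition :: "real \<Rightarrow> (real \<Rightarrow> real) \<Rightarrow> (real \<Rightarrow> real) \<Rightarrow> (real \<Rightarrow> real) \<Rightarrow> (real \<Rightarrow> real)
     \<Rightarrow> (real \<Rightarrow> real) \<Rightarrow> (real \<Rightarrow> real) \<Rightarrow> bool" where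
  "min_condition T a1 a2 x1 x2 l1 l2 \<longleftrightarrow>
     (AE t in lborel. t \<in> {0..T} \<longrightarrow>
        (\<forall>b1 b2. 0 \<le> b1 \<and> b1 \<le> 1 \<and> 0 \<le> b2 \<and> b2 \<le> 1 \<and> b1 + b2 \<le> 2 \<longrightarrow>
           - xbar (x1 t) (x2 t) * (a1 t * l1 t + a2 t * l2 t)
             \<le> - xbar (x1 t) (x2 t) * (b1 * l1 t + b2 * l2 t)))"

end

theory Submission
  imports Defs
begin

lemma ae_negl:
  assumes "AE x in lborel. P x"
  obtains N where "negligible N" "\<And>x. x \<notin> N \<Longrightarrow> P x"
proof -
  from assms obtain N where N: "{x \<in> space lborel. \<not> P x} \<subseteq> N" "emeasure lborel N = 0" "N \<in> sets lborel"
    by (rule AE_E)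
  have "N \<in> null_sets lborel" using N by auto
  then have "N \<in> null_sets lebesgue" by (simp add: null_sets_completionI)
  then have "negligible N" by (simp add: negligible_iff_null_sets)
  moreover have "\<And>x. x \<notin> N \<Longrightarrow> P x" using N(1) by auto
  ultimately show ?thesis using that by blast
qed

lemma int_upper:
  fixes g :: "real \<Rightarrow> real"
  assumes "(g has_integral I) {u..v}" "u \<le> v" "negligible N"
    "\<And>x. x \<in> {u..v} - N \<Longrightarrow> g x \<le> B"
  shows "I \<le> B * (v - u)"
proof -
  let ?g = "\<lambda>x. if x \<in> N then B else g x"
  have "(?g has_integral I) {u..v}"
    by (rule has_integral_spike[OF assms(3) _ assms(1)]) auto
  moreover have "((\<lambda>x. B) has_integral (B * (v - u))) {u..v}"
    using has_integral_const_real[of B u v] assms(2) by (simp add: mult.commute)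
  ultimately show ?thesis
    by (rule has_integral_le) (use assms(4) in auto)
qed

lemma int_lower:
  fixes g :: "real \<Rightarrow> real"
  assumes "(g has_integral I) {u..v}" "u \<le> v" "negligible N"
    "\<And>x. x \<in> {u..v} - N \<Longrightarrow> B \<le> g x"
  shows "B * (v - u) \<le> I"
proof -
  have "((\<lambda>x. - g x) has_integral (- I)) {u..v}" using assms(1) by (rule has_integral_neg)
  from int_upper[OF this assms(2,3), of "-B"] assms(4) show ?thesis by force
qed

lemma Mzero:
  fixes M c :: real
  assumes "M \<le> c * M" "0 \<le> M" "c < 1"
  shows "M = 0"
proof -
  have "(1 - c) * M \<le> 0" using assms(1) by (simp add: algebra_simps)
  moreover have "0 \<le> (1 - c) * M" using assms(2,3) by simp
  ultimately have "(1 - c) * M = 0" by linarith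
  then show ?thesis using assms(3) by simp
qed

lemma uniq:
  fixes f g :: "real \<Rightarrow> real"
  assumes "p \<le> q" "c \<in> {p..q}" "0 \<le> K" "K * (q - p) < 1"
    and cont: "continuous_on {p..q} f" and fc: "f c = 0"
    and int: "\<And>u v. p \<le> u \<Longrightarrow> u \<le> v \<Longrightarrow> v \<le> q \<Longrightarrow> (g has_integral (f v - f u)) {u..v}"
    and N: "negligible N" and gb: "\<And>x. x \<in> {p..q} - N \<Longrightarrow> \<bar>g x\<bar> \<le> K * \<bar>f x\<bar>"
  shows "\<forall>t\<in>{p..q}. f t = 0"
proof -
  have "continuous_on {p..q} (\<lambda>t. \<bar>f t\<bar>)" using cont by (intro continuous_intros)
  then obtain r where r: "r \<in> {p..q}" "\<And>t. t \<in> {p..q} \<Longrightarrow> \<bar>f t\<bar> \<le> \<bar>f r\<bar>"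
    using continuous_attains_sup[OF compact_Icc, of p q] assms(1) by fastforce
  define M where "M = \<bar>f r\<bar>"
  have M0: "0 \<le> M" by (simp add: M_def)
  have bnd: "\<bar>f v - f u\<bar> \<le> K * M * (v - u)" if "p \<le> u" "u \<le> v" "v \<le> q" for u v
  proof -
    have gi: "(g has_integral (f v - f u)) {u..v}" using int that by auto
    have up: "\<And>x. x \<in> {u..v} - N \<Longrightarrow> g x \<le> K * M"
    proof -
      fix x assume x: "x \<in> {u..v} - N"
      then have "\<bar>g x\<bar> \<le> K * \<bar>f x\<bar>" using gb that by auto
      also have "\<dots> \<le> K * M" using r(2)[of x] x that assms(3) M_def by (auto intro: mult_left_mono)
      finally show "g x \<le> K * M" by simp
    qed
    have lo: "\<And>x. x \<in> {u..v} - N \<Longrightarrow> - (K * M) \<le> g x"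
    proof -
      fix x assume x: "x \<in> {u..v} - N"
      then have "\<bar>g x\<bar> \<le> K * \<bar>f x\<bar>" using gb that by auto
      also have "\<dots> \<le> K * M" using r(2)[of x] x that assms(3) M_def by (auto intro: mult_left_mono)
      finally show "- (K * M) \<le> g x" by simp
    qed
    show ?thesis using int_upper[OF gi that(2) N up] int_lower[OF gi that(2) N lo] by simp
  qed
  have "M \<le> K * M * (q - p)"
  proof (cases "c \<le> r")
    case True
    have "M = \<bar>f r - f c\<bar>" using fc M_def by simp
    also have "\<dots> \<le> K * M * (r - c)" using bnd[of c r] True r assms(2) by auto
    also have "\<dots> \<le> K * M * (q - p)" using r assms(2,3) M0 by (auto intro!: mult_left_mono)
    finally show ?thesis .
  next
    case False
    have "M = \<bar>f c - f r\<bar>" using fc M_def by simp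
    also have "\<dots> \<le> K * M * (c - r)" using bnd[of r c] False r assms(2) by auto
    also have "\<dots> \<le> K * M * (q - p)" using r assms(2,3) M0 by (auto intro!: mult_left_mono)
    finally show ?thesis .
  qed
  then have "M = 0" using M0 assms(4) Mzero[of M "K*(q-p)"] by (simp add: mult_ac)
  then show ?thesis using r(2) M_def by fastforce
qed

lemma uniq1:
  fixes f g :: "real \<Rightarrow> real"
  assumes "p \<le> q" "0 \<le> K" "K * (q - p) < 1"
    and cont: "continuous_on {p..q} f" and fc: "f p = 0" and neg: "\<And>t. t \<in> {p..q} \<Longrightarrow> f t \<le> 0"
    and int: "\<And>v. p \<le> v \<Longrightarrow> v \<le> q \<Longrightarrow> (g has_integral (f v - f p)) {p..v}"
    and N: "negligible N" and gb: "\<And>x. x \<in> {p..q} - N \<Longrightarrow> K * f x \<le> g x"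
  shows "\<forall>t\<in>{p..q}. f t = 0"
proof -
  have "continuous_on {p..q} (\<lambda>t. - f t)" using cont by (intro continuous_intros)
  then obtain r where r: "r \<in> {p..q}" "\<And>t. t \<in> {p..q} \<Longrightarrow> - f t \<le> - f r"
    using continuous_attains_sup[OF compact_Icc, of p q] assms(1) by fastforce
  define M where "M = - f r"
  have M0: "0 \<le> M" using neg r by (simp add: M_def)
  have lo: "\<And>x. x \<in> {p..r} - N \<Longrightarrow> - (K * M) \<le> g x"
  proof -
    fix x assume x: "x \<in> {p..r} - N"
    have "- (K * M) \<le> K * f x" using r(2)[of x] x r(1) assms(2) M_def
      by (auto simp: mult_left_mono)
    also have "\<dots> \<le> g x" using gb x r(1) by auto
    finally show "- (K * M) \<le> g x" .
  qed
  have "- (K * M) * (r - p) \<le> f r - f p"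
    using int_lower[OF int[of r] _ N lo] r by auto
  then have "M \<le> K * M * (r - p)" using fc M_def by simp
  also have "\<dots> \<le> K * M * (q - p)" using r assms M0 by (auto intro!: mult_left_mono)
  finally have "M \<le> K * M * (q - p)" .
  then have "M = 0" using M0 assms(3) Mzero[of M "K*(q-p)"] by (simp add: mult_ac)
  then show ?thesis using r(2) M_def neg by fastforce
qed

lemma first_zero:
  fixes f :: "real \<Rightarrow> real"
  assumes "continuous_on {a..b} f" "a \<le> b" "f a \<noteq> 0" "f b = 0"
  shows "\<exists>s. a < s \<and> s \<le> b \<and> f s = 0 \<and> (\<forall>t. a \<le> t \<and> t < s \<longrightarrow> f t \<noteq> 0)"
proof -
  define Z where "Z = {a..b} \<inter> f -` {0}"
  have cl: "closed Z" unfolding Z_def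
    by (rule continuous_closed_preimage[OF assms(1)]) auto
  have ne: "Z \<noteq> {}" using assms unfolding Z_def by auto
  have bb: "bdd_below Z" unfolding Z_def by (rule bdd_belowI[of _ a]) auto
  have sZ: "Inf Z \<in> Z" by (rule closed_contains_Inf[OF ne bb cl])
  have "\<forall>t. a \<le> t \<and> t < Inf Z \<longrightarrow> f t \<noteq> 0"
  proof (intro allI impI)
    fix t assume t: "a \<le> t \<and> t < Inf Z"
    show "f t \<noteq> 0"
    proof
      assume "f t = 0"
      then have "t \<in> Z" using t sZ unfolding Z_def by auto
      then have "Inf Z \<le> t" using bb by (rule cInf_lower)
      then show False using t by simp
    qed
  qed
  moreover have "a \<noteq> Inf Z" using sZ assms(3) unfolding Z_def by auto
  moreover have "a \<le> Inf Z \<and> Inf Z \<le> b \<and> f (Inf Z) = 0" using sZ unfolding Z_def by auto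
  ultimately show ?thesis by (intro exI[of _ "Inf Z"]) (auto simp: order_le_less)
qed

lemma last_zero:
  fixes f :: "real \<Rightarrow> real"
  assumes "continuous_on {a..b} f" "a \<le> b" "f a = 0" "f b \<noteq> 0"
  shows "\<exists>s. a \<le> s \<and> s < b \<and> f s = 0 \<and> (\<forall>t. s < t \<and> t \<le> b \<longrightarrow> f t \<noteq> 0)"
proof -
  define Z where "Z = {a..b} \<inter> f -` {0}"
  have cl: "closed Z" unfolding Z_def
    by (rule continuous_closed_preimage[OF assms(1)]) auto
  have ne: "Z \<noteq> {}" using assms unfolding Z_def by auto
  have bb: "bdd_above Z" unfolding Z_def by (rule bdd_aboveI[of _ b]) auto
  have sZ: "Sup Z \<in> Z" by (rule closed_contains_Sup[OF ne bb cl])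
  have "\<forall>t. Sup Z < t \<and> t \<le> b \<longrightarrow> f t \<noteq> 0"
  proof (intro allI impI)
    fix t assume t: "Sup Z < t \<and> t \<le> b"
    show "f t \<noteq> 0"
    proof
      assume "f t = 0"
      then have "t \<in> Z" using t sZ unfolding Z_def by auto
      then have "t \<le> Sup Z" using bb by (rule cSup_upper)
      then show False using t by simp
    qed
  qed
  moreover have "b \<noteq> Sup Z" using sZ assms(4) unfolding Z_def by auto
  moreover have "a \<le> Sup Z \<and> Sup Z \<le> b \<and> f (Sup Z) = 0" using sZ unfolding Z_def by auto
  ultimately show ?thesis by (intro exI[of _ "Sup Z"]) (auto simp: order_le_less)
qed

lemma sign_keep:
  fixes f :: "real \<Rightarrow> real"
  assumes "continuous_on {s..b} f" "\<forall>t. s < t \<and> t \<le> b \<longrightarrow> f t \<noteq> 0" "f b > 0"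
  shows "\<forall>t. s < t \<and> t \<le> b \<longrightarrow> f t > 0"
proof (intro allI impI)
  fix t assume t: "s < t \<and> t \<le> b"
  show "f t > 0"
  proof (rule ccontr)
    assume "\<not> f t > 0"
    then have "f t \<le> 0" by simp
    moreover have "continuous_on {t..b} f" using assms(1) by (rule continuous_on_subset) (use t in auto)
    ultimately obtain x where "t \<le> x" "x \<le> b" "f x = 0"
      using IVT'[of f t 0 b] assms(3) t by auto
    then show False using assms(2) t by auto
  qed
qed

lemma subint:
  fixes f g :: "real \<Rightarrow> real"
  assumes "\<forall>t\<in>{0..T}. (g has_integral (f t - f 0)) {0..t}" "0 \<le> u" "u \<le> v" "v \<le> T"
  shows "(g has_integral (f v - f u)) {u..v}"
proof -
  have gv: "(g has_integral (f v - f 0)) {0..v}" using assms by auto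
  have gu: "(g has_integral (f u - f 0)) {0..u}" using assms by auto
  have "g integrable_on {u..v}"
    using integrable_subinterval_real[OF has_integral_integrable[OF gv]] assms by auto
  then have gi: "(g has_integral integral {u..v} g) {u..v}" by (rule integrable_integral)
  have "(g has_integral (f u - f 0 + integral {u..v} g)) {0..v}"
    by (rule has_integral_combine[OF assms(2,3) gu gi])
  then have "f v - f 0 = f u - f 0 + integral {u..v} g"
    using gv by (rule has_integral_unique[rotated])
  then have "integral {u..v} g = f v - f u" by simp
  then show ?thesis using gi by simp
qed

lemma contint:
  fixes f g :: "real \<Rightarrow> real"
  assumes "\<forall>t\<in>{0..T}. (g has_integral (f t - f 0)) {0..t}" "0 \<le> T"
  shows "continuous_on {0..T} f"
proof -
  have "g integrable_on {0..T}" using assms by auto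
  then have c: "continuous_on {0..T} (\<lambda>t. f 0 + integral {0..t} g)"
    by (intro continuous_intros indefinite_integral_continuous_1)
  show ?thesis
  proof (rule continuous_on_eq[OF c])
    fix t assume "t \<in> {0..T}"
    then have "integral {0..t} g = f t - f 0" using assms by (auto intro: integral_unique)
    then show "f 0 + integral {0..t} g = f t" by simp
  qed
qed

lemma uniqT:
  fixes f g :: "real \<Rightarrow> real"
  assumes I: "\<forall>t\<in>{0..T}. (g has_integral (f t - f 0)) {0..t}" and "0 \<le> p" "p \<le> q" "q \<le> T"
    "c \<in> {p..q}" "0 \<le> K" "K * (q - p) < 1" "f c = 0"
    "negligible N" "\<And>x. x \<in> {p..q} - N \<Longrightarrow> \<bar>g x\<bar> \<le> K * \<bar>f x\<bar>"
  shows "\<forall>t\<in>{p..q}. f t = 0"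
proof -
  have c: "continuous_on {p..q} f"
    using contint[OF I] assms(2-4) by (auto intro: continuous_on_subset)
  have i: "\<And>u v. p \<le> u \<Longrightarrow> u \<le> v \<Longrightarrow> v \<le> q \<Longrightarrow> (g has_integral f v - f u) {u..v}"
    using subint[OF I] assms(2-4) by auto
  show ?thesis using uniq[of p q c K f g N, OF assms(3,5,6,7) c assms(8) i assms(9,10)] by blast
qed

lemma uniq1T:
  fixes f g :: "real \<Rightarrow> real"
  assumes I: "\<forall>t\<in>{0..T}. (g has_integral (f t - f 0)) {0..t}" and "0 \<le> p" "p \<le> q" "q \<le> T"
    "0 \<le> K" "K * (q - p) < 1" "f p = 0" "\<And>t. t \<in> {p..q} \<Longrightarrow> f t \<le> 0"
    "negligible N" "\<And>x. x \<in> {p..q} - N \<Longrightarrow> K * f x \<le> g x"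
  shows "\<forall>t\<in>{p..q}. f t = 0"
proof -
  have c: "continuous_on {p..q} f"
    using contint[OF I] assms(2-4) by (auto intro: continuous_on_subset)
  have i: "\<And>v. p \<le> v \<Longrightarrow> v \<le> q \<Longrightarrow> (g has_integral f v - f p) {p..v}"
    using subint[OF I] assms(2-4) by auto
  show ?thesis using uniq1[of p q K f g N, OF assms(3,5,6) c assms(7,8) i assms(9,10)] by blast
qed

lemma GU:
  fixes f g :: "real \<Rightarrow> real"
  assumes I: "\<forall>t\<in>{0..T}. (g has_integral (f t - f 0)) {0..t}" and T0: "0 \<le> T"
    and z: "z \<in> {0..T}" "f z = 0" and K: "0 \<le> K"
    and N: "negligible N" and b: "\<And>x. x \<in> {0..T} - N \<Longrightarrow> \<bar>g x\<bar> \<le> K * \<bar>f x\<bar>"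
  shows "\<forall>t\<in>{0..T}. f t = 0"
proof (rule ccontr)
  assume "\<not> ?thesis"
  then obtain t0 where t0: "t0 \<in> {0..T}" "f t0 \<noteq> 0" by auto
  have cont: "continuous_on {0..T} f" by (rule contint[OF I T0])
  define d where "d = 1 / (2 * (K + 1))"
  have d0: "0 < d" using K by (simp add: d_def)
  have Kd: "K * d < 1" using K by (simp add: d_def field_simps)
  have Kd': "K * e < 1" if "0 \<le> e" "e \<le> d" for e
  proof -
    have "K * e \<le> K * d" using K that by (simp add: mult_left_mono)
    then show ?thesis using Kd by simp
  qed
  show False
  proof (cases "t0 < z")
    case True
    have "continuous_on {t0..z} f" using cont t0 z by (auto intro: continuous_on_subset)
    then obtain s where s: "t0 < s" "s \<le> z" "f s = 0" "\<forall>t. t0 \<le> t \<and> t < s \<longrightarrow> f t \<noteq> 0"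
      using first_zero[of t0 z f] True t0 z by auto
    define p where "p = max t0 (s - d)"
    have "\<forall>t\<in>{p..s}. f t = 0"
      by (rule uniqT[of T g f p s s K N, OF I _ _ _ _ K _ s(3) N])
         (use t0 z s d0 Kd' b in \<open>auto simp: p_def\<close>)
    then have "f p = 0" using s d0 by (auto simp: p_def)
    moreover have "t0 \<le> p \<and> p < s" using s d0 by (auto simp: p_def)
    ultimately show False using s(4) by blast
  next
    case False
    then have "z < t0" using t0 z by (cases "z = t0") auto
    have "continuous_on {z..t0} f" using cont t0 z by (auto intro: continuous_on_subset)
    then obtain s where s: "z \<le> s" "s < t0" "f s = 0" "\<forall>t. s < t \<and> t \<le> t0 \<longrightarrow> f t \<noteq> 0"
      using last_zero[of z t0 f] \<open>z < t0\<close> t0 z by auto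
    define q where "q = min t0 (s + d)"
    have "\<forall>t\<in>{s..q}. f t = 0"
      by (rule uniqT[of T g f s q s K N, OF I _ _ _ _ K _ s(3) N])
         (use t0 z s d0 Kd' b in \<open>auto simp: q_def\<close>)
    then have "f q = 0" using s d0 by (auto simp: q_def)
    moreover have "s < q \<and> q \<le> t0" using s d0 by (auto simp: q_def)
    ultimately show False using s(4) by blast
  qed
qed

theorem proposition6:
  fixes T :: real and a1 a2 x1 x2 l1 l2 :: "real \<Rightarrow> real"
  assumes "T > 0"
    and "xbar (x1 0) (x2 0) > 0"
    and "x1 0 > x2 0"
    and "optimal T a1 a2 x1 x2"
    and "\<forall>t\<in>{0..T}. x1 t \<ge> x2 t"
    and "costate T a1 a2 x1 x2 l1 l2"
    and "min_condition T a1 a2 x1 x2 l1 l2"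
  shows "(l2 T > 0 \<longrightarrow> (\<forall>t\<in>{0..T}. l1 t > 0 \<and> l2 t > 0))
       \<and> (l2 T = 0 \<longrightarrow> (\<forall>t\<in>{0..T}. l1 t > 0 \<and> l2 t = 0))
       \<and> (l2 T < 0 \<longrightarrow> (\<forall>t\<in>{0..T}. l2 t < 0))"
proof -
  have T0: "0 \<le> T" using assms(1) by simp
  have adm: "admissible T a1 a2" and traj: "trajectory T a1 a2 x1 x2"
    using assms(4) unfolding optimal_def by auto
  have ab: "\<And>t. t \<in> {0..T} \<Longrightarrow> 0 \<le> a1 t \<and> a1 t \<le> 1 \<and> 0 \<le> a2 t \<and> a2 t \<le> 1"
    using adm unfolding admissible_def by auto
  define u where "u = (\<lambda>s. xbar (x1 s) (x2 s))"
  define U where "U = (\<lambda>s. - ((a1 s + a2 s) / 2) * u s)"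
  have Iu: "\<forall>t\<in>{0..T}. (U has_integral (u t - u 0)) {0..t}"
  proof
    fix t assume t: "t \<in> {0..T}"
    have h1: "((\<lambda>s. - x1 s + (1 - a1 s) * xbar (x1 s) (x2 s)) has_integral (x1 t - x1 0)) {0..t}"
     and h2: "((\<lambda>s. - x2 s + (1 - a2 s) * xbar (x1 s) (x2 s)) has_integral (x2 t - x2 0)) {0..t}"
      using traj t unfolding trajectory_def by auto
    have hh: "((\<lambda>s. (1/2) * ((- x1 s + (1 - a1 s) * xbar (x1 s) (x2 s)) + (- x2 s + (1 - a2 s) * xbar (x1 s) (x2 s))))
        has_integral ((1/2) * ((x1 t - x1 0) + (x2 t - x2 0)))) {0..t}"
      by (intro has_integral_mult_right has_integral_add h1 h2)
    have e1: "(\<lambda>s. (1/2) * ((- x1 s + (1 - a1 s) * xbar (x1 s) (x2 s)) + (- x2 s + (1 - a2 s) * xbar (x1 s) (x2 s)))) = U"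
      by (rule ext) (simp add: U_def u_def xbar_def field_simps)
    have e2: "(1/2) * ((x1 t - x1 0) + (x2 t - x2 0)) = u t - u 0"
      by (simp add: u_def xbar_def field_simps)
    show "(U has_integral (u t - u 0)) {0..t}" using hh unfolding e1 e2 .
  qed
  have u_pos: "\<forall>t\<in>{0..T}. u t > 0"
  proof (rule ccontr)
    assume "\<not> ?thesis"
    then obtain t0 where t0: "t0 \<in> {0..T}" "u t0 \<le> 0" by force
    have cu: "continuous_on {0..t0} u"
      using contint[OF Iu T0] t0 by (auto intro: continuous_on_subset)
    have u0: "u 0 > 0" using assms(2) by (simp add: u_def)
    obtain z where z: "0 \<le> z" "z \<le> t0" "u z = 0"
      using IVT2'[of u t0 0 0, OF t0(2) _ _ cu] u0 t0 by auto
    have "\<forall>t\<in>{0..T}. u t = 0"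
    proof (rule GU[OF Iu T0 _ z(3), of 1 "{}"])
      show "z \<in> {0..T}" using z t0 by auto
      fix x assume "x \<in> {0..T} - {}"
      then have "(a1 x + a2 x) * \<bar>u x\<bar> \<le> 2 * \<bar>u x\<bar>" using ab[of x]
        by (intro mult_right_mono) auto
      moreover have "\<bar>U x\<bar> = (a1 x + a2 x) / 2 * \<bar>u x\<bar>" using ab[of x] \<open>x \<in> {0..T} - {}\<close>
        by (auto simp: U_def abs_mult)
      ultimately show "\<bar>U x\<bar> \<le> 1 * \<bar>u x\<bar>" by simp
    qed auto
    then show False using u0 T0 by auto
  qed
  define G1 where "G1 = (\<lambda>s. (1 + a1 s) / 2 * l1 s - (1 - a2 s) / 2 * l2 s)"
  define G2 where "G2 = (\<lambda>s. (1 + a2 s) / 2 * l2 s - (1 - a1 s) / 2 * l1 s)"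
  have I1: "\<forall>t\<in>{0..T}. (G1 has_integral (l1 t - l1 0)) {0..t}"
   and I2: "\<forall>t\<in>{0..T}. (G2 has_integral (l2 t - l2 0)) {0..t}"
   and lT: "l1 T = x1 T" "l2 T = x2 T"
    using assms(6) unfolding costate_def G1_def G2_def by auto
  define m where "m = (\<lambda>s. l1 s - l2 s)"
  have Im: "\<forall>t\<in>{0..T}. (m has_integral (m t - m 0)) {0..t}"
  proof
    fix t assume t: "t \<in> {0..T}"
    have hh: "((\<lambda>s. G1 s - G2 s) has_integral ((l1 t - l1 0) - (l2 t - l2 0))) {0..t}"
      using I1 I2 t by (intro has_integral_diff) auto
    have e1: "(\<lambda>s. G1 s - G2 s) = m" by (rule ext) (simp add: G1_def G2_def m_def field_simps)
    have e2: "(l1 t - l1 0) - (l2 t - l2 0) = m t - m 0" by (simp add: m_def)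
    show "(m has_integral (m t - m 0)) {0..t}" using hh unfolding e1 e2 .
  qed
  have mT: "m T \<ge> 0" using lT assms(5) T0 by (simp add: m_def)
  have mb: "\<And>x. x \<in> {0..T} - {} \<Longrightarrow> \<bar>m x\<bar> \<le> 1 * \<bar>m x\<bar>" by simp
  have m_pos: "\<forall>t\<in>{0..T}. m t > 0" if mTp: "m T > 0"
  proof (rule ccontr)
    assume "\<not> ?thesis"
    then obtain t0 where t0: "t0 \<in> {0..T}" "m t0 \<le> 0" by force
    have cm: "continuous_on {t0..T} m"
      using contint[OF Im T0] t0 by (auto intro: continuous_on_subset)
    obtain z where z: "t0 \<le> z" "z \<le> T" "m z = 0"
      using IVT'[of m t0 0 T, OF t0(2) _ _ cm] mTp t0 by auto
    have "\<forall>t\<in>{0..T}. m t = 0"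
      by (rule GU[OF Im T0 _ z(3) _ _ mb]) (use z t0 in auto)
    then show False using mTp T0 by auto
  qed
  have m_nn: "\<forall>t\<in>{0..T}. m t \<ge> 0"
  proof (cases "m T = 0")
    case True
    have "\<forall>t\<in>{0..T}. m t = 0"
      by (rule GU[OF Im T0 _ True _ _ mb]) (use T0 in auto)
    then show ?thesis by auto
  next
    case False
    then show ?thesis using m_pos mT by fastforce
  qed
  obtain N where N: "negligible N" and NN: "\<And>t. t \<notin> N \<Longrightarrow> t \<in> {0..T} \<longrightarrow>
        (\<forall>b1 b2. 0 \<le> b1 \<and> b1 \<le> 1 \<and> 0 \<le> b2 \<and> b2 \<le> 1 \<and> b1 + b2 \<le> 2 \<longrightarrow>
           - xbar (x1 t) (x2 t) * (a1 t * l1 t + a2 t * l2 t)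
             \<le> - xbar (x1 t) (x2 t) * (b1 * l1 t + b2 * l2 t))"
    using assms(7) unfolding min_condition_def by (rule ae_negl) blast
  have mc: "(1 - a1 x) * l1 x \<le> 0 \<and> (l1 x \<ge> 0 \<longrightarrow> (1 - a1 x) * l1 x = 0)" if x: "x \<in> {0..T} - N" for x
  proof (cases "l1 x > 0")
    case True
    have "- u x * (a1 x * l1 x + a2 x * l2 x) \<le> - u x * (1 * l1 x + a2 x * l2 x)"
    proof -
      have "\<forall>b1 b2. 0 \<le> b1 \<and> b1 \<le> 1 \<and> 0 \<le> b2 \<and> b2 \<le> 1 \<and> b1 + b2 \<le> 2 \<longrightarrow>
           - xbar (x1 x) (x2 x) * (a1 x * l1 x + a2 x * l2 x)
             \<le> - xbar (x1 x) (x2 x) * (b1 * l1 x + b2 * l2 x)" using NN[of x] x by auto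
      note AA = this
      have "- xbar (x1 x) (x2 x) * (a1 x * l1 x + a2 x * l2 x)
             \<le> - xbar (x1 x) (x2 x) * (1 * l1 x + a2 x * l2 x)"
        using ab[of x] x by (intro AA[rule_format, of 1 "a2 x"]) auto
      then show ?thesis unfolding u_def .
    qed
    then have "u x * (1 * l1 x) \<le> u x * (a1 x * l1 x)" by (simp add: algebra_simps)
    then have "1 * l1 x \<le> a1 x * l1 x" using u_pos x by (auto simp: mult_le_cancel_left_pos)
    then have "1 \<le> a1 x" using True by (simp add: mult_le_cancel_right)
    then have "a1 x = 1" using ab[of x] x by auto
    then show ?thesis by simp
  next
    case False
    then show ?thesis using ab[of x] x by (auto simp: mult_nonneg_nonpos)
  qed
  have cl1: "continuous_on {0..T} l1" by (rule contint[OF I1 T0])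
  have cl2: "continuous_on {0..T} l2" by (rule contint[OF I2 T0])
  have l1eq: "\<And>t. l1 t = l2 t + m t" by (simp add: m_def)
  show ?thesis
  proof (intro conjI impI)
    assume pos: "l2 T > 0"
    have l2pos: "\<forall>t\<in>{0..T}. l2 t > 0"
    proof (rule ccontr)
      assume "\<not> ?thesis"
      then obtain t0 where t0: "t0 \<in> {0..T}" "l2 t0 \<le> 0" by force
      have c: "continuous_on {t0..T} l2" using cl2 t0 by (auto intro: continuous_on_subset)
      obtain z where z: "t0 \<le> z" "z \<le> T" "l2 z = 0"
        using IVT'[of l2 t0 0 T, OF t0(2) _ _ c] pos t0 by auto
      have cz: "continuous_on {z..T} l2" using cl2 z t0 by (auto intro: continuous_on_subset)
      obtain s where s: "z \<le> s" "s < T" "l2 s = 0" "\<forall>t. s < t \<and> t \<le> T \<longrightarrow> l2 t \<noteq> 0"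
        using last_zero[OF cz z(2,3)] pos by auto
      have cs: "continuous_on {s..T} l2" using cl2 z s t0 by (auto intro: continuous_on_subset)
      have sp: "\<forall>t. s < t \<and> t \<le> T \<longrightarrow> l2 t > 0" by (rule sign_keep[OF cs s(4) pos])
      define q where "q = min T (s + 1/2)"
      have "\<forall>t\<in>{s..q}. l2 t = 0"
      proof (rule uniqT[OF I2, of s q s 1 N])
        fix x assume x: "x \<in> {s..q} - N"
        have l2x: "l2 x \<ge> 0" using sp[rule_format, of x] s x by (cases "x = s") (auto simp: q_def)
        have xT: "x \<in> {0..T} - N" using x s z t0 by (auto simp: q_def)
        have "l1 x \<ge> 0" using l1eq[of x] l2x m_nn xT by fastforce
        then have "(1 - a1 x) * l1 x = 0" using mc[OF xT] by auto
        then have "G2 x = (1 + a2 x) / 2 * l2 x" by (simp add: G2_def algebra_simps)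
        moreover have "(1 + a2 x) / 2 * l2 x \<le> 1 * l2 x"
          using ab[of x] xT l2x by (intro mult_right_mono) auto
        moreover have "0 \<le> (1 + a2 x) / 2 * l2 x" using ab[of x] xT l2x by simp
        ultimately show "\<bar>G2 x\<bar> \<le> 1 * \<bar>l2 x\<bar>" by simp
      qed (use s z t0 N in \<open>auto simp: q_def\<close>)
      moreover have "s < q \<and> q \<le> T" using s by (auto simp: q_def)
      ultimately show False using s(4) by auto
    qed
    show "\<forall>t\<in>{0..T}. l1 t > 0 \<and> l2 t > 0"
      using l2pos m_nn l1eq by (metis add_pos_nonneg)
  next
    assume zero: "l2 T = 0"
    have "u T > 0" using u_pos T0 by auto
    then have "x1 T > 0" using zero lT by (simp add: u_def xbar_def)
    then have "m T > 0" using lT zero by (simp add: m_def)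
    then have mp: "\<forall>t\<in>{0..T}. m t > 0" by (rule m_pos)
    have l2z: "\<forall>t\<in>{0..T}. l2 t = 0"
    proof (rule ccontr)
      assume "\<not> ?thesis"
      then obtain t0 where t0: "t0 \<in> {0..T}" "l2 t0 \<noteq> 0" by force
      have c: "continuous_on {t0..T} l2" using cl2 t0 by (auto intro: continuous_on_subset)
      obtain s where s: "t0 < s" "s \<le> T" "l2 s = 0" "\<forall>t. t0 \<le> t \<and> t < s \<longrightarrow> l2 t \<noteq> 0"
        using first_zero[OF c _ t0(2) zero] t0 by auto
      have sT: "s \<in> {0..T}" using s t0 by auto
      have "l1 s > 0" using l1eq[of s] s(3) mp sT by auto
      then obtain d where d: "d > 0" "\<forall>t\<in>{0..T}. dist t s < d \<longrightarrow> dist (l1 t) (l1 s) < l1 s"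
        using cl1 sT unfolding continuous_on_iff by blast
      define p where "p = max t0 (s - min (d/2) (1/2))"
      have "\<forall>t\<in>{p..s}. l2 t = 0"
      proof (rule uniqT[OF I2, of p s s 1 N])
        fix x assume x: "x \<in> {p..s} - N"
        have xT: "x \<in> {0..T} - N" using x s t0 by (auto simp: p_def)
        have "dist x s < d" using x d by (auto simp: p_def dist_real_def)
        then have "l1 x > 0" using d(2) xT by (auto simp: dist_real_def)
        then have "(1 - a1 x) * l1 x = 0" using mc[OF xT] by auto
        then have "G2 x = (1 + a2 x) / 2 * l2 x" by (simp add: G2_def algebra_simps)
        moreover have "\<bar>(1 + a2 x) / 2 * l2 x\<bar> = (1 + a2 x) / 2 * \<bar>l2 x\<bar>"
          using ab[of x] xT by (simp add: abs_mult)
        moreover have "(1 + a2 x) / 2 * \<bar>l2 x\<bar> \<le> 1 * \<bar>l2 x\<bar>"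
          using ab[of x] xT by (intro mult_right_mono) auto
        ultimately show "\<bar>G2 x\<bar> \<le> 1 * \<bar>l2 x\<bar>" by simp
      qed (use s t0 d N in \<open>auto simp: p_def\<close>)
      moreover have "t0 \<le> p \<and> p < s" using s d by (auto simp: p_def)
      ultimately show False using s(4) by auto
    qed
    show "\<forall>t\<in>{0..T}. l1 t > 0 \<and> l2 t = 0"
      using l2z mp l1eq by auto
  next
    assume neg: "l2 T < 0"
    show "\<forall>t\<in>{0..T}. l2 t < 0"
    proof (rule ccontr)
      assume "\<not> ?thesis"
      then obtain t0 where t0: "t0 \<in> {0..T}" "l2 t0 \<ge> 0" by force
      have c: "continuous_on {t0..T} l2" using cl2 t0 by (auto intro: continuous_on_subset)
      obtain z where z: "t0 \<le> z" "z \<le> T" "l2 z = 0"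
        using IVT2'[of l2 T 0 t0, OF _ t0(2) _ c] neg t0 by auto
      have cz: "continuous_on {z..T} l2" using cl2 z t0 by (auto intro: continuous_on_subset)
      obtain s where s: "z \<le> s" "s < T" "l2 s = 0" "\<forall>t. s < t \<and> t \<le> T \<longrightarrow> l2 t \<noteq> 0"
        using last_zero[OF cz z(2,3)] neg by auto
      have cs: "continuous_on {s..T} (\<lambda>t. - l2 t)" using cl2 z s t0
        by (auto intro!: continuous_intros intro: continuous_on_subset)
      have sn: "\<forall>t. s < t \<and> t \<le> T \<longrightarrow> - l2 t > 0" by (rule sign_keep[OF cs]) (use s(4) neg in auto)
      define q where "q = min T (s + 1/2)"
      have "\<forall>t\<in>{s..q}. l2 t = 0"
      proof (rule uniq1T[OF I2, of s q 1 N])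
        fix x assume x: "x \<in> {s..q}"
        show "l2 x \<le> 0" using sn[rule_format, of x] s x by (cases "x = s") (auto simp: q_def)
      next
        fix x assume x: "x \<in> {s..q} - N"
        have l2x: "l2 x \<le> 0" using sn[rule_format, of x] s x by (cases "x = s") (auto simp: q_def)
        have xT: "x \<in> {0..T} - N" using x s z t0 by (auto simp: q_def)
        have "(1 - a1 x) * l1 x \<le> 0" using mc[OF xT] by auto
        moreover have "l2 x \<le> (1 + a2 x) / 2 * l2 x"
        proof -
          have "(1 + a2 x) / 2 * (- l2 x) \<le> 1 * (- l2 x)"
            using ab[of x] xT l2x by (intro mult_right_mono) auto
          then show ?thesis by simp
        qed
        moreover have "G2 x = (1 + a2 x) / 2 * l2 x - ((1 - a1 x) * l1 x) / 2" by (simp add: G2_def)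
        ultimately show "1 * l2 x \<le> G2 x" by linarith
      qed (use s z t0 N in \<open>auto simp: q_def\<close>)
      moreover have "s < q \<and> q \<le> T" using s by (auto simp: q_def)
      ultimately show False using s(4) by auto
    qed
  qed
qed

end
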